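(* Let $k\le n$ be positive integers and let $A_1,\dots,A_m\in\mathbb{S}^n_+$ with $\dim\operatorname{span}\{A_1,\dots,A_m\}=2$. Let $\mathcal{X}=\{X\in\mathbb{S}^n_+:\operatorname{rank}(X)\le k,\ \|X\|_2\le1\}$, $\mathcal{C}=\{(z,X)\in\mathbb{R}\times\mathcal{X}: z\le\langle A_i,X\rangle\ \forall i\in[m]\}$ and $\mathcal{C}_{\mathrm{rel}}=\{(z,X)\in\mathbb{R}\times\operatorname{clconv}(\mathcal{X}): z\le\langle A_i,X\rangle\ \forall i\in[m]\}$. Then $\mathcal{C}_{\mathrm{rel}}=\operatorname{clconv}(\mathcal{C})$.
   Context: This concerns fair PCA: $\max\{z:(z,X)\in\mathcal{C}\}$, where $A_i$ is the covariance matrix of group $i$, and its Dantzig–Wolfe relaxation over $\mathcal{C}_{\mathrm{rel}}$. $\langle A,X\rangle=\operatorname{tr}(A^\top X)$, $\|X\|_2$ is the spectral norm, $\mathbb{S}^n_+$ denotes $n\times n$ positive semidefinite matrices, and $\operatorname{clconv}$ is the closed convex hull. *)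

theory Defs
  imports "HOL-Analysis.Analysis"
begin

definition psd :: "real^'n^'n \<Rightarrow> bool" where
  "psd X \<longleftrightarrow> transpose X = X \<and> (\<forall>x. 0 \<le> x \<bullet> (X *v x))"

definition minner :: "real^'n^'n \<Rightarrow> real^'n^'n \<Rightarrow> real" where
  "minner A X = trace (transpose A ** X)"

definition spec_norm :: "real^'n^'n \<Rightarrow> real" where
  "spec_norm X = onorm (\<lambda>x. X *v x)"

definition Xset :: "nat \<Rightarrow> (real^'n^'n) set" where
  "Xset k = {X. psd X \<and> rank X \<le> k \<and> spec_norm X \<le> 1}"

definition Cset :: "nat \<Rightarrow> nat \<Rightarrow> (nat \<Rightarrow> real^'n^'n) \<Rightarrow> (real \<times> (real^'n^'n)) set" where
  "Cset k m A = {(z, X). X \<in> Xset k \<and> (\<forall>i<m. z \<le> minner (A i) X)}"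

definition Crel :: "nat \<Rightarrow> nat \<Rightarrow> (nat \<Rightarrow> real^'n^'n) \<Rightarrow> (real \<times> (real^'n^'n)) set" where
  "Crel k m A = {(z, X). X \<in> closure (convex hull (Xset k)) \<and> (\<forall>i<m. z \<le> minner (A i) X)}"

end

theory Submission
  imports Defs
begin

lemma inner_mv: "(x::real^'n) \<bullet> (P *v y) = (\<Sum>i\<in>UNIV. \<Sum>j\<in>UNIV. x$i * P$i$j * y$j)"
  by (simp add: inner_vec_def matrix_vector_mult_def sum_distrib_left mult.assoc)

lemma trace_alt: "trace (P::real^'n^'n) = (\<Sum>i\<in>UNIV. P$i$i)"
  by (simp add: trace_def)

lemma minner_alt: "minner A X = (\<Sum>i\<in>UNIV. \<Sum>j\<in>UNIV. A$i$j * X$i$j)"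
  unfolding minner_def trace_def matrix_matrix_mult_def transpose_def
  by simp (rule sum.swap)

lemma sym_inner:
  fixes A :: "real^'n^'n"
  assumes "transpose A = A"
  shows "x \<bullet> (A *v y) = (A *v x) \<bullet> y"
proof -
  have "x \<bullet> (A *v y) = (x v* A) \<bullet> y" by (simp add: dot_lmul_matrix)
  also have "x v* A = transpose A *v x" by simp
  finally show ?thesis using assms by simp
qed

lemma mv_scaleR: "(A::real^'n^'m) *v (c *\<^sub>R x) = c *\<^sub>R (A *v x)"
  by (simp add: vec_eq_iff matrix_vector_mult_def sum_distrib_left algebra_simps)

lemma mv_sum: "(A::real^'n^'m) *v (\<Sum>b\<in>B. f b) = (\<Sum>b\<in>B. A *v f b)"
  by (induction B rule: infinite_finite_induct) (auto simp: matrix_vector_right_distrib)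

lemma quad_nonpos_imp:
  fixes c d :: real
  assumes "\<forall>t. 2*t*c + t^2*d \<le> 0"
  shows "c = 0"
proof (rule ccontr)
  assume c: "c \<noteq> 0"
  define e where "e = \<bar>d\<bar> + 1"
  have e: "e > 0" unfolding e_def by simp
  have "2*(c/e)*c + (c/e)^2*d \<le> 0" using assms by blast
  hence "(2*(c/e)*c + (c/e)^2*d) * e^2 \<le> 0" using e by (simp add: mult_nonpos_nonneg)
  moreover have "(2*(c/e)*c + (c/e)^2*d) * e^2 = c^2 * (2*e + d)" using e
    by (simp add: field_simps power2_eq_square)
  ultimately have "c^2 * (2*e + d) \<le> 0" by simp
  moreover have "2*e + d > 0" unfolding e_def by (simp add: abs_if)
  moreover have "c^2 > 0" using c by simp
  ultimately show False by (simp add: mult_le_0_iff)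
qed

lemma quad_cs:
  fixes a b c :: real
  assumes "\<forall>t. 0 \<le> a + 2*t*b + t^2*c" "0 \<le> a" "0 \<le> c"
  shows "b^2 \<le> a*c"
proof (cases "c = 0")
  case True
  have "b = 0"
  proof (rule ccontr)
    assume b: "b \<noteq> 0"
    have "0 \<le> a + 2*(-(a+1)/(2*b))*b + (-(a+1)/(2*b))^2*c" using assms(1) by blast
    thus False using b True by (simp add: field_simps)
  qed
  thus ?thesis using assms by simp
next
  case False
  hence c: "c > 0" using assms by simp
  have "0 \<le> a + 2*(-b/c)*b + (-b/c)^2*c" using assms(1) by blast
  hence "0 \<le> (a + 2*(-b/c)*b + (-b/c)^2*c) * c" using c by simp
  hence "0 \<le> a*c - b^2" using c by (simp add: field_simps power2_eq_square)
  thus ?thesis by simp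
qed

lemma quad_scaleR: "(c *\<^sub>R x) \<bullet> ((A::real^'n^'n) *v (c *\<^sub>R x)) = c^2 * (x \<bullet> (A *v x))"
  by (simp add: mv_scaleR power2_eq_square)

lemma eigen_exists:
  fixes A :: "real^'n^'n"
  assumes sym: "transpose A = A" and S: "subspace S" and inv: "\<forall>x\<in>S. A *v x \<in> S"
    and ne: "S \<noteq> {0}"
  shows "\<exists>v\<in>S. norm v = 1 \<and> A *v v = (v \<bullet> (A *v v)) *\<^sub>R v"
proof -
  let ?K = "S \<inter> sphere 0 1"
  let ?f = "\<lambda>x. x \<bullet> (A *v x)"
  have "compact ?K"
    using closed_subspace[OF S] compact_sphere by (rule closed_Int_compact)
  obtain x0 where x0: "x0 \<in> S" "x0 \<noteq> 0" using ne S subspace_0 by blast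
  have "x0 /\<^sub>R norm x0 \<in> ?K" using x0 S by (simp add: subspace_scale)
  hence Kne: "?K \<noteq> {}" by blast
  have "continuous_on ?K ?f"
    by (intro continuous_intros bounded_linear.continuous_on[OF matrix_vector_mul_bounded_linear])
  then obtain v where v: "v \<in> ?K" and vmax: "\<And>u. u \<in> ?K \<Longrightarrow> ?f u \<le> ?f v"
    using continuous_attains_sup[OF \<open>compact ?K\<close> Kne] by blast
  define l where "l = ?f v"
  have vS: "v \<in> S" and vn: "norm v = 1" using v by auto
  have vv: "v \<bullet> v = 1" using vn by (simp add: dot_square_norm)
  have le: "?f u \<le> l * (u \<bullet> u)" if u: "u \<in> S" for u
  proof (cases "u = 0")
    case True thus ?thesis by simp
  next
    case False
    have "(1 / norm u) *\<^sub>R u \<in> ?K" using u False S by (simp add: subspace_scale)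
    hence "?f ((1 / norm u) *\<^sub>R u) \<le> l" using vmax l_def by blast
    hence "(1 / norm u)^2 * ?f u \<le> l" by (simp only: quad_scaleR)
    hence "(1 / norm u)^2 * ?f u * (norm u)^2 \<le> l * (norm u)^2" using False
      by (simp add: mult_right_mono)
    hence "?f u \<le> l * (norm u * norm u)" using False by (simp add: power2_eq_square field_simps)
    thus ?thesis by (simp add: dot_square_norm power2_eq_square)
  qed
  have orth: "w \<bullet> (A *v v) = 0" if w: "w \<in> S" "w \<bullet> v = 0" for w
  proof -
    have "\<forall>t. 2*t*(w \<bullet> (A *v v)) + t^2*(?f w - l * (w \<bullet> w)) \<le> 0"
    proof
      fix t :: real
      have "v + t *\<^sub>R w \<in> S" using w vS S by (simp add: subspace_add subspace_scale)
      hence h1: "?f (v + t *\<^sub>R w) \<le> l * ((v + t *\<^sub>R w) \<bullet> (v + t *\<^sub>R w))" by (rule le)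
      have e2: "?f (v + t *\<^sub>R w) = l + 2*t*(w \<bullet> (A *v v)) + t^2 * ?f w"
        using sym_inner[OF sym, of v w]
        by (simp add: matrix_vector_right_distrib mv_scaleR inner_add_left inner_add_right l_def
            power2_eq_square inner_commute ring_distribs)
      have e3: "(v + t *\<^sub>R w) \<bullet> (v + t *\<^sub>R w) = 1 + t^2 * (w \<bullet> w)"
        using vv w(2) by (simp add: inner_add_left inner_add_right inner_commute power2_eq_square)
      have h2: "l + 2*t*(w \<bullet> (A *v v)) + t^2 * ?f w \<le> l * (1 + t^2 * (w \<bullet> w))"
        using h1 by (simp only: e2 e3)
      have e4: "l * (1 + t^2 * (w \<bullet> w)) = l + t^2 * (l * (w \<bullet> w))" by (simp add: algebra_simps)
      have e5: "t^2*(?f w - l * (w \<bullet> w)) = t^2 * ?f w - t^2 * (l * (w \<bullet> w))" by (simp add: algebra_simps)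
      show "2*t*(w \<bullet> (A *v v)) + t^2*(?f w - l * (w \<bullet> w)) \<le> 0"
        using h2 unfolding e4 e5 by linarith
    qed
    thus ?thesis by (rule quad_nonpos_imp)
  qed
  define w where "w = A *v v - l *\<^sub>R v"
  have wS: "w \<in> S" unfolding w_def using inv vS S by (simp add: subspace_diff subspace_scale)
  have wv: "w \<bullet> v = 0" unfolding w_def using vv by (simp add: inner_diff_left inner_diff_right l_def inner_commute)
  have "w \<bullet> (A *v v) = 0" using orth wS wv by blast
  hence "w \<bullet> w = 0" unfolding w_def using wv[unfolded w_def]
    by (simp add: inner_diff_left inner_diff_right)
  hence "w = 0" by simp
  thus ?thesis using vS vn unfolding w_def l_def by auto
qed

lemma spectral_sub:
  fixes A :: "real^'n^'n"
  assumes sym: "transpose A = A"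
  shows "subspace S \<Longrightarrow> (\<forall>x\<in>S. A *v x \<in> S) \<Longrightarrow>
    \<exists>B. B \<subseteq> S \<and> finite B \<and> pairwise orthogonal B \<and> (\<forall>b\<in>B. norm b = 1) \<and> span B = S
      \<and> (\<forall>b\<in>B. A *v b = (b \<bullet> (A *v b)) *\<^sub>R b)"
proof (induction "dim S" arbitrary: S rule: less_induct)
  case less
  show ?case
  proof (cases "S = {0}")
    case True
    thus ?thesis by (intro exI[of _ "{}"]) auto
  next
    case False
    obtain v where vS: "v \<in> S" and vn: "norm v = 1" and ve: "A *v v = (v \<bullet> (A *v v)) *\<^sub>R v"
      using eigen_exists[OF sym less.prems False] by blast
    have vv: "v \<bullet> v = 1" using vn by (simp add: dot_square_norm)
    define S' where "S' = {x \<in> S. v \<bullet> x = 0}"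
    have S'sub: "subspace S'" unfolding S'_def using less.prems(1)
      by (auto simp: subspace_def inner_add_right)
    have S'inv: "\<forall>x\<in>S'. A *v x \<in> S'"
    proof
      fix x assume x: "x \<in> S'"
      have "v \<bullet> (A *v x) = (A *v v) \<bullet> x" by (rule sym_inner[OF sym])
      also have "\<dots> = 0" using x unfolding S'_def by (subst ve) simp
      finally show "A *v x \<in> S'" using x less.prems(2) unfolding S'_def by auto
    qed
    have "v \<notin> S'" using vv unfolding S'_def by simp
    hence "S' \<subset> S" using vS unfolding S'_def by blast
    moreover have "span S' = S'" "span S = S" using S'sub less.prems(1) by (simp_all add: span_eq_iff)
    ultimately have "span S' \<subset> span S" by (simp only:)
    hence "dim S' < dim S" by (rule dim_psubset)
    then obtain B' where B': "B' \<subseteq> S'" "finite B'" "pairwise orthogonal B'" "\<forall>b\<in>B'. norm b = 1"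
      "span B' = S'" "\<forall>b\<in>B'. A *v b = (b \<bullet> (A *v b)) *\<^sub>R b"
      using less.hyps[OF _ S'sub S'inv] by blast
    have vB': "v \<notin> B'" using B'(1) vv unfolding S'_def by auto
    have orthv: "orthogonal v b" if "b \<in> B'" for b using B'(1) that unfolding S'_def orthogonal_def by auto
    have po: "pairwise orthogonal (insert v B')"
      using B'(3) orthv by (auto simp: pairwise_insert orthogonal_commute)
    have "span (insert v B') = S"
    proof
      show "span (insert v B') \<subseteq> S"
      proof (rule span_minimal[OF _ less.prems(1)])
        show "insert v B' \<subseteq> S" using B'(1) vS unfolding S'_def by auto
      qed
      show "S \<subseteq> span (insert v B')"
      proof
        fix x assume x: "x \<in> S"
        have "x - (v \<bullet> x) *\<^sub>R v \<in> S'" unfolding S'_def using x vS vv less.prems(1)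
          by (simp add: subspace_diff subspace_scale inner_diff_right)
        hence "x - (v \<bullet> x) *\<^sub>R v \<in> span (insert v B')" using B'(5) span_mono[of B' "insert v B'"] by auto
        moreover have "(v \<bullet> x) *\<^sub>R v \<in> span (insert v B')" by (simp add: span_base span_scale)
        ultimately have "(x - (v \<bullet> x) *\<^sub>R v) + (v \<bullet> x) *\<^sub>R v \<in> span (insert v B')" by (rule span_add)
        thus "x \<in> span (insert v B')" by simp
      qed
    qed
    moreover have "insert v B' \<subseteq> S" using B'(1) vS unfolding S'_def by auto
    ultimately show ?thesis using B'(2,4,6) vS vn ve po by (intro exI[of _ "insert v B'"]) simp
  qed
qed

lemma spectral:
  fixes A :: "real^'n^'n"
  assumes sym: "transpose A = A"
  obtains B where "finite B" "pairwise orthogonal B" "\<forall>b\<in>B. norm b = 1" "span B = UNIV"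
      "\<forall>b\<in>B. A *v b = (b \<bullet> (A *v b)) *\<^sub>R b"
  using spectral_sub[OF sym, of UNIV] by auto

definition onb :: "(real^'n) set \<Rightarrow> bool" where
  "onb B \<longleftrightarrow> finite B \<and> pairwise orthogonal B \<and> (\<forall>b\<in>B. norm b = 1) \<and> span B = UNIV"

lemma spectral_onb:
  fixes A :: "real^'n^'n"
  assumes "transpose A = A"
  obtains B where "onb B" "\<forall>b\<in>B. A *v b = (b \<bullet> (A *v b)) *\<^sub>R b"
  using spectral[OF assms] unfolding onb_def by metis

lemma onb_inner:
  assumes "onb B" "b \<in> B" "c \<in> B"
  shows "b \<bullet> c = (if b = c then 1 else 0)"
proof (cases "b = c")
  case True
  have "norm b = 1" using assms unfolding onb_def by auto
  thus ?thesis using True by (simp add: dot_square_norm)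
next
  case False
  thus ?thesis using assms unfolding onb_def pairwise_def orthogonal_def by auto
qed

lemma onb_expand:
  assumes "onb B"
  shows "x = (\<Sum>b\<in>B. (x \<bullet> b) *\<^sub>R b)"
  using orthonormal_basis_expand[of B x] assms unfolding onb_def by auto

lemma onb_parseval:
  assumes "onb B"
  shows "x \<bullet> y = (\<Sum>b\<in>B. (x \<bullet> b) * (y \<bullet> b))"
proof -
  have "x \<bullet> y = x \<bullet> (\<Sum>b\<in>B. (y \<bullet> b) *\<^sub>R b)" using onb_expand[OF assms, of y] by simp
  also have "\<dots> = (\<Sum>b\<in>B. (x \<bullet> b) * (y \<bullet> b))" by (simp add: inner_sum_right mult.commute)
  finally show ?thesis .
qed

lemma onb_trace:
  assumes "onb B"
  shows "trace (P::real^'n^'n) = (\<Sum>b\<in>B. b \<bullet> (P *v b))"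
proof -
  have d: "(\<Sum>b\<in>B. b$i * b$j) = (if i = j then 1 else 0)" for i j
  proof -
    have "(\<Sum>b\<in>B. b$i * b$j) = (\<Sum>b\<in>B. (axis i 1 \<bullet> b) * (axis j (1::real) \<bullet> b))"
      by (simp add: inner_axis')
    also have "\<dots> = axis i 1 \<bullet> axis j (1::real)" by (rule onb_parseval[OF assms, symmetric])
    finally show ?thesis by (simp add: inner_axis_axis)
  qed
  have e1: "(\<Sum>b\<in>B. b$i * P$i$j * b$j) = P$i$j * (if i = j then 1 else 0)" for i j
  proof -
    have "(\<Sum>b\<in>B. b$i * P$i$j * b$j) = (\<Sum>b\<in>B. P$i$j * (b$i * b$j))"
      by (rule sum.cong) (simp_all add: algebra_simps)
    also have "\<dots> = P$i$j * (\<Sum>b\<in>B. b$i * b$j)" by (rule sum_distrib_left[symmetric])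
    finally show ?thesis by (simp only: d)
  qed
  have "(\<Sum>b\<in>B. b \<bullet> (P *v b)) = (\<Sum>b\<in>B. \<Sum>i\<in>UNIV. \<Sum>j\<in>UNIV. b$i * P$i$j * b$j)"
    by (simp only: inner_mv)
  also have "\<dots> = (\<Sum>i\<in>UNIV. \<Sum>b\<in>B. \<Sum>j\<in>UNIV. b$i * P$i$j * b$j)"
    by (rule sum.swap)
  also have "\<dots> = (\<Sum>i\<in>UNIV. \<Sum>j\<in>UNIV. \<Sum>b\<in>B. b$i * P$i$j * b$j)"
    by (rule sum.cong[OF refl], rule sum.swap)
  also have "\<dots> = (\<Sum>i\<in>UNIV. \<Sum>j\<in>UNIV. P$i$j * (if i = j then 1 else 0))"
    by (simp only: e1)
  also have "\<dots> = (\<Sum>i\<in>UNIV. P$i$i)"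
  proof (rule sum.cong[OF refl])
    fix i
    have "(\<Sum>j\<in>UNIV. P$i$j * (if i = j then 1 else 0)) = (\<Sum>j\<in>UNIV. if i = j then P$i$j else 0)"
      by (rule sum.cong) auto
    also have "\<dots> = P$i$i" by (simp add: sum.delta)
    finally show "(\<Sum>j\<in>UNIV. P$i$j * (if i = j then 1 else 0)) = P$i$i" .
  qed
  finally show ?thesis by (simp add: trace_alt)
qed

lemma onb_eig_apply:
  assumes "onb B" "\<forall>b\<in>B. P *v b = l b *\<^sub>R b"
  shows "P *v x = (\<Sum>b\<in>B. ((x \<bullet> b) * l b) *\<^sub>R b)"
proof -
  have "P *v x = P *v (\<Sum>b\<in>B. (x \<bullet> b) *\<^sub>R b)" using onb_expand[OF assms(1), of x] by simp
  also have "\<dots> = (\<Sum>b\<in>B. ((x \<bullet> b) * l b) *\<^sub>R b)" using assms(2) by (simp add: mv_sum mv_scaleR)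
  finally show ?thesis .
qed

lemma onb_eig_quad:
  assumes "onb B" "\<forall>b\<in>B. P *v b = l b *\<^sub>R b"
  shows "x \<bullet> (P *v x) = (\<Sum>b\<in>B. l b * (x \<bullet> b)^2)"
  using onb_eig_apply[OF assms, of x]
  by (simp add: inner_sum_right power2_eq_square mult.commute mult.left_commute)

lemma onb_norm2:
  assumes "onb B"
  shows "x \<bullet> x = (\<Sum>b\<in>B. (x \<bullet> b)^2)"
  unfolding onb_parseval[OF assms, of x x] by (simp add: power2_eq_square)

lemma psd_cs:
  fixes P :: "real^'n^'n"
  assumes "psd P"
  shows "(x \<bullet> (P *v y))^2 \<le> (x \<bullet> (P *v x)) * (y \<bullet> (P *v y))"
proof (rule quad_cs)
  have sym: "transpose P = P" and nn: "\<And>z. 0 \<le> z \<bullet> (P *v z)" using assms unfolding psd_def by auto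
  show "0 \<le> x \<bullet> (P *v x)" "0 \<le> y \<bullet> (P *v y)" using nn by auto
  show "\<forall>t. 0 \<le> x \<bullet> (P *v x) + 2 * t * (x \<bullet> (P *v y)) + t\<^sup>2 * (y \<bullet> (P *v y))"
  proof
    fix t :: real
    have "(x + t *\<^sub>R y) \<bullet> (P *v (x + t *\<^sub>R y)) = x \<bullet> (P *v x) + 2 * t * (x \<bullet> (P *v y)) + t\<^sup>2 * (y \<bullet> (P *v y))"
      using sym_inner[OF sym, of y x]
      by (simp add: matrix_vector_right_distrib mv_scaleR inner_add_left inner_add_right
            power2_eq_square inner_commute ring_distribs)
    thus "0 \<le> x \<bullet> (P *v x) + 2 * t * (x \<bullet> (P *v y)) + t\<^sup>2 * (y \<bullet> (P *v y))"
      using nn[of "x + t *\<^sub>R y"] by simp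
  qed
qed

lemma psd_le_I_norm:
  fixes P :: "real^'n^'n"
  assumes "psd P" "\<forall>x. x \<bullet> (P *v x) \<le> x \<bullet> x"
  shows "norm (P *v x) \<le> norm x"
proof (cases "P *v x = 0")
  case True thus ?thesis by simp
next
  case False
  let ?y = "P *v x"
  have "(?y \<bullet> ?y)^2 \<le> (?y \<bullet> (P *v ?y)) * (x \<bullet> (P *v x))"
    using psd_cs[OF assms(1), of ?y x] by simp
  also have "\<dots> \<le> (?y \<bullet> ?y) * (x \<bullet> x)"
    using assms psd_def by (intro mult_mono) auto
  finally have "(?y \<bullet> ?y) * (?y \<bullet> ?y) \<le> (?y \<bullet> ?y) * (x \<bullet> x)" by (simp add: power2_eq_square)
  moreover have "?y \<bullet> ?y > 0" using False by simp
  ultimately have "?y \<bullet> ?y \<le> x \<bullet> x" by simp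
  thus ?thesis by (simp add: dot_square_norm)
qed

lemma psd_le_I_spec:
  fixes P :: "real^'n^'n"
  assumes "psd P" "\<forall>x. x \<bullet> (P *v x) \<le> x \<bullet> x"
  shows "spec_norm P \<le> 1"
  unfolding spec_norm_def by (rule onorm_le) (use psd_le_I_norm[OF assms] in simp)

lemma spec_quad_le:
  fixes P :: "real^'n^'n"
  assumes "spec_norm P \<le> 1"
  shows "x \<bullet> (P *v x) \<le> x \<bullet> x"
proof -
  have c: "x \<bullet> (P *v x) \<le> norm x * norm (P *v x)" by (rule norm_cauchy_schwarz)
  have "norm (P *v x) \<le> spec_norm P * norm x"
    unfolding spec_norm_def by (rule onorm) simp
  moreover have "spec_norm P * norm x \<le> norm x" using mult_right_mono[OF assms norm_ge_zero[of x]] by simp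
  ultimately have "norm (P *v x) \<le> norm x" by linarith
  hence "norm x * norm (P *v x) \<le> norm x * norm x" by (simp add: mult_left_mono)
  with c show ?thesis by (simp add: dot_square_norm power2_eq_square)
qed

lemma minner_psd_nonneg:
  fixes A Y :: "real^'n^'n"
  assumes "psd A" "psd Y"
  shows "0 \<le> minner A Y"
proof -
  have sym: "transpose A = A" using assms unfolding psd_def by auto
  obtain B where B: "onb B" "\<forall>b\<in>B. A *v b = (b \<bullet> (A *v b)) *\<^sub>R b" using spectral_onb[OF sym] by blast
  have "minner A Y = trace (A ** Y)" unfolding minner_def using sym by simp
  also have "\<dots> = (\<Sum>b\<in>B. b \<bullet> ((A ** Y) *v b))" by (rule onb_trace[OF B(1)])
  also have "\<dots> = (\<Sum>b\<in>B. (A *v b) \<bullet> (Y *v b))"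
    by (rule sum.cong) (simp_all add: matrix_vector_mul_assoc[symmetric] sym_inner[OF sym])
  also have "\<dots> = (\<Sum>b\<in>B. (b \<bullet> (A *v b)) * (b \<bullet> (Y *v b)))"
  proof (rule sum.cong[OF refl])
    fix b assume b: "b \<in> B"
    have e: "A *v b = (b \<bullet> (A *v b)) *\<^sub>R b" using B(2) b by blast
    have "(A *v b) \<bullet> (Y *v b) = ((b \<bullet> (A *v b)) *\<^sub>R b) \<bullet> (Y *v b)"
      by (rule arg_cong[where f="\<lambda>v. v \<bullet> (Y *v b)"], rule e)
    thus "(A *v b) \<bullet> (Y *v b) = (b \<bullet> (A *v b)) * (b \<bullet> (Y *v b))" by (simp only: inner_scaleR_left)
  qed
  also have "\<dots> \<ge> 0" using assms unfolding psd_def by (intro sum_nonneg mult_nonneg_nonneg) auto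
  finally show ?thesis .
qed

definition Fset :: "nat \<Rightarrow> (real^'n^'n) set" where
  "Fset k = {P. transpose P = P \<and> (\<forall>x. 0 \<le> x \<bullet> (P *v x)) \<and> (\<forall>x. x \<bullet> (P *v x) \<le> x \<bullet> x)
     \<and> trace P \<le> real k}"

lemma Xset_sub_Fset: "Xset k \<subseteq> Fset k"
proof
  fix P :: "real^'n^'n" assume "P \<in> Xset k"
  hence psd: "psd P" and rk: "rank P \<le> k" and sn: "spec_norm P \<le> 1" unfolding Xset_def by auto
  have sym: "transpose P = P" using psd unfolding psd_def by auto
  obtain B where B: "onb B" "\<forall>b\<in>B. P *v b = (b \<bullet> (P *v b)) *\<^sub>R b" using spectral_onb[OF sym] by blast
  define l where "l b = b \<bullet> (P *v b)" for b
  have Bf: "finite B" using B(1) unfolding onb_def by auto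
  have bb: "b \<bullet> b = 1" if "b \<in> B" for b using onb_inner[OF B(1) that that] by simp
  have l01: "0 \<le> l b \<and> l b \<le> 1" if "b \<in> B" for b
    using psd spec_quad_le[OF sn, of b] bb[OF that] unfolding l_def psd_def by auto
  define N where "N = {b\<in>B. l b \<noteq> 0}"
  have Nf: "finite N" using Bf unfolding N_def by auto
  have "trace P = (\<Sum>b\<in>B. l b)" unfolding l_def by (rule onb_trace[OF B(1)])
  also have "\<dots> = (\<Sum>b\<in>N. l b)" unfolding N_def by (rule sum.mono_neutral_right) (use Bf in auto)
  also have "\<dots> \<le> (\<Sum>b\<in>N. 1)" using l01 unfolding N_def by (intro sum_mono) auto
  also have "\<dots> = real (card N)" by simp
  finally have tr: "trace P \<le> real (card N)" .
  have "N \<subseteq> range (\<lambda>x. P *v x)"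
  proof
    fix b assume b: "b \<in> N"
    have e: "P *v b = l b *\<^sub>R b" using b B(2) unfolding N_def l_def by auto
    have "l b \<noteq> 0" using b unfolding N_def by auto
    hence "P *v ((1 / l b) *\<^sub>R b) = b" by (simp add: mv_scaleR e)
    thus "b \<in> range (\<lambda>x. P *v x)" by (metis rangeI)
  qed
  moreover have "independent N"
  proof (rule pairwise_orthogonal_independent)
    show "pairwise orthogonal N" using B(1) unfolding onb_def N_def pairwise_def by auto
    show "0 \<notin> N" using B(1) unfolding onb_def N_def by auto
  qed
  ultimately have "card N \<le> dim (range (\<lambda>x. P *v x))" by (rule independent_card_le_dim)
  hence "card N \<le> k" using rk by (simp add: rank_dim_range)
  hence "trace P \<le> real k" using tr by linarith
  thus "P \<in> Fset k" unfolding Fset_def using psd spec_quad_le[OF sn] unfolding psd_def by auto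
qed

lemma mv_scaleR_l: "(c *\<^sub>R (P::real^'n^'m)) *v x = c *\<^sub>R (P *v x)"
  by (simp add: vec_eq_iff matrix_vector_mult_def sum_distrib_left algebra_simps)

lemma transpose_add': "transpose ((P::real^'n^'n) + Q) = transpose P + transpose Q"
  by (simp add: vec_eq_iff transpose_def)

lemma transpose_scaleR': "transpose (c *\<^sub>R (P::real^'n^'n)) = c *\<^sub>R transpose P"
  by (simp add: vec_eq_iff transpose_def)

lemma trace_scaleR': "trace (c *\<^sub>R (P::real^'n^'n)) = c * trace P"
  by (simp add: trace_alt sum_distrib_left)

lemma trace_add': "trace ((P::real^'n^'n) + Q) = trace P + trace Q"
  by (simp add: trace_alt sum.distrib)

lemma minner_add_r: "minner A (P + Q) = minner A P + minner A Q"
  by (simp add: minner_alt sum.distrib algebra_simps)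

lemma minner_scaleR_r: "minner A (c *\<^sub>R P) = c * minner A P"
  by (simp add: minner_alt sum_distrib_left algebra_simps)

lemma minner_add_l: "minner (A + B) P = minner A P + minner B P"
  by (simp add: minner_alt sum.distrib algebra_simps)

lemma minner_scaleR_l: "minner (c *\<^sub>R A) P = c * minner A P"
  by (simp add: minner_alt sum_distrib_left algebra_simps)

lemma minner_diff_l: "minner (A - B) P = minner A P - minner B P"
  by (simp add: minner_alt sum_subtractf algebra_simps)

lemmas lin_simps = matrix_vector_mult_add_rdistrib mv_scaleR_l transpose_add' transpose_scaleR'
  trace_scaleR' trace_add' minner_add_r minner_scaleR_r inner_add_right inner_scaleR_right

lemma cont_lin:
  fixes f :: "real^'n^'n \<Rightarrow> 'b::real_normed_vector"
  assumes "linear f"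
  shows "continuous_on S f"
  using assms by (simp add: linear_continuous_on linear_conv_bounded_linear)

lemma convex_Fset: "convex (Fset k)"
  unfolding convex_def
proof (intro ballI allI impI)
  fix P Q :: "real^'n^'n" and u v :: real
  assume P: "P \<in> Fset k" and Q: "Q \<in> Fset k" and uv: "0 \<le> u" "0 \<le> v" "u + v = 1"
  have Ps: "transpose P = P" "\<And>x. 0 \<le> x \<bullet> (P *v x)" "\<And>x. x \<bullet> (P *v x) \<le> x \<bullet> x" "trace P \<le> real k"
    using P unfolding Fset_def by auto
  have Qs: "transpose Q = Q" "\<And>x. 0 \<le> x \<bullet> (Q *v x)" "\<And>x. x \<bullet> (Q *v x) \<le> x \<bullet> x" "trace Q \<le> real k"
    using Q unfolding Fset_def by auto
  have "transpose (u *\<^sub>R P + v *\<^sub>R Q) = u *\<^sub>R P + v *\<^sub>R Q" using Ps Qs by (simp add: lin_simps)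
  moreover have "0 \<le> x \<bullet> ((u *\<^sub>R P + v *\<^sub>R Q) *v x)" for x
    using Ps(2)[of x] Qs(2)[of x] uv by (simp add: lin_simps)
  moreover have "x \<bullet> ((u *\<^sub>R P + v *\<^sub>R Q) *v x) \<le> x \<bullet> x" for x
  proof -
    have "u * (x \<bullet> (P *v x)) \<le> u * (x \<bullet> x)" using Ps(3)[of x] uv by (simp add: mult_left_mono)
    moreover have "v * (x \<bullet> (Q *v x)) \<le> v * (x \<bullet> x)" using Qs(3)[of x] uv by (simp add: mult_left_mono)
    ultimately have "u * (x \<bullet> (P *v x)) + v * (x \<bullet> (Q *v x)) \<le> (u + v) * (x \<bullet> x)"
      by (simp add: algebra_simps)
    thus ?thesis using uv by (simp add: lin_simps)
  qed
  moreover have "trace (u *\<^sub>R P + v *\<^sub>R Q) \<le> real k"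
  proof -
    have "u * trace P \<le> u * real k" using Ps(4) uv by (simp add: mult_left_mono)
    moreover have "v * trace Q \<le> v * real k" using Qs(4) uv by (simp add: mult_left_mono)
    ultimately have "u * trace P + v * trace Q \<le> (u + v) * real k" by (simp add: algebra_simps)
    thus ?thesis using uv by (simp add: lin_simps)
  qed
  ultimately show "u *\<^sub>R P + v *\<^sub>R Q \<in> Fset k" unfolding Fset_def by blast
qed

lemma lin_transpose: "linear (transpose :: real^'n^'n \<Rightarrow> real^'n^'n)"
  by (rule linearI) (simp_all add: lin_simps)

lemma lin_quad: "linear (\<lambda>P::real^'n^'n. x \<bullet> (P *v y))"
  by (rule linearI) (simp_all add: lin_simps)

lemma lin_trace: "linear (trace :: real^'n^'n \<Rightarrow> real)"
  by (rule linearI) (simp_all add: lin_simps)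

lemma lin_minner: "linear (minner M :: real^'n^'n \<Rightarrow> real)"
  by (rule linearI) (simp_all add: lin_simps)

lemma closed_Fset: "closed (Fset k)"
proof -
  have "Fset k = {P. transpose P = id P} \<inter> {P. \<forall>x. (\<lambda>_. 0) P \<le> x \<bullet> (P *v x)}
      \<inter> {P. \<forall>x. x \<bullet> (P *v x) \<le> (\<lambda>_. x \<bullet> x) P} \<inter> {P. trace P \<le> (\<lambda>_. real k) P}"
    unfolding Fset_def by auto
  also have "closed \<dots>"
    by (intro closed_Int closed_Collect_all closed_Collect_eq closed_Collect_le continuous_on_const
        continuous_on_id cont_lin lin_transpose lin_quad lin_trace linear_id)
  finally show ?thesis .
qed

lemma closed_H: "closed {P::real^'n^'n. minner M P = 0}"
  by (intro closed_Collect_eq continuous_on_const cont_lin lin_minner)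

lemma entry_as_quad: "axis i 1 \<bullet> ((P::real^'n^'n) *v axis j 1) = P$i$j"
  by (simp add: inner_axis' matrix_vector_mult_basis column_def)

lemma bounded_Fset: "bounded (Fset k :: (real^'n^'n) set)"
proof -
  have ent: "\<bar>P$i$j\<bar> \<le> 1" if P: "P \<in> Fset k" for P :: "real^'n^'n" and i j
  proof -
    have psd: "psd P" using P unfolding Fset_def psd_def by auto
    have le1: "axis l 1 \<bullet> (P *v axis l 1) \<le> 1" for l
      using P unfolding Fset_def by (auto simp: inner_axis_axis intro: order_trans)
    have ge0: "0 \<le> axis l 1 \<bullet> (P *v axis l 1)" for l
      using P unfolding Fset_def by auto
    have "(P$i$j)^2 \<le> (axis i 1 \<bullet> (P *v axis i 1)) * (axis j 1 \<bullet> (P *v axis j 1))"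
      using psd_cs[OF psd, of "axis i 1" "axis j 1"] by (simp add: entry_as_quad)
    also have "\<dots> \<le> 1 * 1" using le1 ge0 by (intro mult_mono) auto
    finally have "(P$i$j)^2 \<le> 1" by simp
    thus ?thesis by (simp add: abs_square_le_1)
  qed
  have "norm P \<le> real (CARD('n) * CARD('n))" if P: "P \<in> Fset k" for P :: "real^'n^'n"
  proof -
    have "norm P \<le> (\<Sum>i\<in>UNIV. norm (P$i))" unfolding norm_vec_def by (rule L2_set_le_sum) simp
    also have "\<dots> \<le> (\<Sum>i\<in>UNIV. \<Sum>j\<in>UNIV. \<bar>P$i$j\<bar>)" by (intro sum_mono norm_le_l1_cart)
    also have "\<dots> \<le> (\<Sum>i\<in>(UNIV::'n set). \<Sum>j\<in>(UNIV::'n set). 1)" using ent[OF P] by (intro sum_mono) auto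
    also have "\<dots> = real (CARD('n) * CARD('n))" by simp
    finally show ?thesis .
  qed
  thus ?thesis unfolding bounded_iff by blast
qed

definition outer :: "real^'n \<Rightarrow> real^'n \<Rightarrow> real^'n^'n" where
  "outer u v = (\<chi> i j. u$i * v$j)"

lemma outer_mv: "outer u v *v x = (v \<bullet> x) *\<^sub>R u"
  by (simp add: vec_eq_iff outer_def matrix_vector_mult_def inner_vec_def sum_distrib_left algebra_simps)

lemma outer_transpose: "transpose (outer u v) = outer v u"
  by (simp add: vec_eq_iff outer_def transpose_def)

lemma outer_trace: "trace (outer u v) = u \<bullet> v"
  by (simp add: trace_alt outer_def inner_vec_def)

lemma abs_cross_le: "\<bar>2 * (a::real) * b\<bar> \<le> a^2 + b^2"
proof -
  have "0 \<le> (\<bar>a\<bar> - \<bar>b\<bar>)^2" by simp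
  hence "2 * \<bar>a\<bar> * \<bar>b\<bar> \<le> a^2 + b^2" by (simp add: power2_eq_square algebra_simps)
  thus ?thesis by (simp add: abs_mult)
qed

lemma perturb:
  fixes P M :: "real^'n^'n"
  assumes PF: "P \<in> Fset k" and PH: "minner M P = 0"
    and B: "onb B" and eig: "\<forall>b\<in>B. P *v b = l b *\<^sub>R b"
    and b1: "b1 \<in> B" "0 < l b1" "l b1 < 1" and b2: "b2 \<in> B" "0 < l b2" "l b2 < 1" and ne: "b1 \<noteq> b2"
    and l01: "\<forall>b\<in>B. 0 \<le> l b \<and> l b \<le> 1"
  shows "\<exists>D. D \<noteq> 0 \<and> P + D \<in> Fset k \<and> minner M (P + D) = 0 \<and> P - D \<in> Fset k \<and> minner M (P - D) = 0"
proof -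
  have sym: "transpose P = P" and tP: "trace P \<le> real k" using PF unfolding Fset_def by auto
  have Bf: "finite B" using B unfolding onb_def by auto
  have b11: "b1 \<bullet> b1 = 1" and b22: "b2 \<bullet> b2 = 1" and b12: "b1 \<bullet> b2 = 0" and b21: "b2 \<bullet> b1 = 0"
    using onb_inner[OF B] b1(1) b2(1) ne by auto
  define E1 where "E1 = outer b1 b1"
  define E2 where "E2 = outer b2 b2"
  define E3 where "E3 = outer b1 b2 + outer b2 b1"
  define m1 where "m1 = minner M E1"
  define m2 where "m2 = minner M E2"
  define m3 where "m3 = minner M E3"
  define \<alpha> where "\<alpha> = (if m3 \<noteq> 0 then 1 else (0::real))"
  define \<beta> where "\<beta> = (if m3 \<noteq> 0 then -1 else (0::real))"
  define \<gamma> where "\<gamma> = (if m3 \<noteq> 0 then (m2 - m1) / m3 else (1::real))"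
  define D where "D = \<alpha> *\<^sub>R E1 + \<beta> *\<^sub>R E2 + \<gamma> *\<^sub>R E3"
  have Dx: "D *v x = (\<alpha> * (b1 \<bullet> x)) *\<^sub>R b1 + (\<beta> * (b2 \<bullet> x)) *\<^sub>R b2
      + (\<gamma> * (b2 \<bullet> x)) *\<^sub>R b1 + (\<gamma> * (b1 \<bullet> x)) *\<^sub>R b2" for x
    unfolding D_def E1_def E2_def E3_def by (simp add: lin_simps outer_mv algebra_simps)
  have Dq: "x \<bullet> (D *v x) = \<alpha> * (b1 \<bullet> x)^2 + \<beta> * (b2 \<bullet> x)^2 + 2 * \<gamma> * (b1 \<bullet> x) * (b2 \<bullet> x)" for x
    unfolding Dx by (simp add: inner_add_right power2_eq_square inner_commute algebra_simps)
  have Dsym: "transpose D = D"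
    unfolding D_def E1_def E2_def E3_def by (simp add: lin_simps outer_transpose)
  have Dtr: "trace D = 0"
    unfolding D_def E1_def E2_def E3_def using b11 b22 b12 b21
    by (simp add: lin_simps outer_trace \<alpha>_def \<beta>_def)
  have DM: "minner M D = 0"
    unfolding D_def by (simp add: lin_simps m1_def[symmetric] m2_def[symmetric] m3_def[symmetric]
        \<alpha>_def \<beta>_def \<gamma>_def)
  have Dne: "D \<noteq> 0"
  proof
    assume D0: "D = 0"
    have "b1 \<bullet> (D *v b1) = \<alpha>" "b2 \<bullet> (D *v b1) = \<gamma>"
      unfolding Dx using b11 b22 b12 b21 by (simp_all add: inner_add_right)
    thus False using D0 unfolding \<alpha>_def \<gamma>_def by (auto split: if_splits)
  qed
  define C where "C = \<bar>\<alpha>\<bar> + \<bar>\<beta>\<bar> + \<bar>\<gamma>\<bar>"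
  have C0: "0 \<le> C" unfolding C_def by simp
  have Dbound: "\<bar>x \<bullet> (D *v x)\<bar> \<le> C * ((b1 \<bullet> x)^2 + (b2 \<bullet> x)^2)" for x
  proof -
    let ?y1 = "b1 \<bullet> x" and ?y2 = "b2 \<bullet> x"
    have "\<bar>\<alpha> * ?y1^2\<bar> \<le> \<bar>\<alpha>\<bar> * (?y1^2 + ?y2^2)" by (simp add: abs_mult mult_left_mono)
    moreover have "\<bar>\<beta> * ?y2^2\<bar> \<le> \<bar>\<beta>\<bar> * (?y1^2 + ?y2^2)" by (simp add: abs_mult mult_left_mono)
    moreover have "\<bar>2 * \<gamma> * ?y1 * ?y2\<bar> \<le> \<bar>\<gamma>\<bar> * (?y1^2 + ?y2^2)"
    proof -
      have "\<bar>2 * \<gamma> * ?y1 * ?y2\<bar> = \<bar>\<gamma>\<bar> * \<bar>2 * ?y1 * ?y2\<bar>" by (simp add: abs_mult)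
      also have "\<dots> \<le> \<bar>\<gamma>\<bar> * (?y1^2 + ?y2^2)" by (rule mult_left_mono[OF abs_cross_le]) simp
      finally show ?thesis .
    qed
    ultimately show ?thesis unfolding Dq C_def by (simp add: algebra_simps) linarith
  qed
  have Pq: "x \<bullet> (P *v x) = (\<Sum>b\<in>B. l b * (x \<bullet> b)^2)" for x by (rule onb_eig_quad[OF B eig])
  have xx: "x \<bullet> x = (\<Sum>b\<in>B. (x \<bullet> b)^2)" for x by (rule onb_norm2[OF B])
  have sub2: "{b1, b2} \<subseteq> B" using b1 b2 by auto
  have lowP: "l b1 * (b1 \<bullet> x)^2 + l b2 * (b2 \<bullet> x)^2 \<le> x \<bullet> (P *v x)" for x
  proof -
    have "(\<Sum>b\<in>{b1,b2}. l b * (x \<bullet> b)^2) \<le> (\<Sum>b\<in>B. l b * (x \<bullet> b)^2)"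
      using l01 by (intro sum_mono2[OF Bf sub2]) auto
    thus ?thesis using ne by (simp add: Pq inner_commute)
  qed
  have upP: "(1 - l b1) * (b1 \<bullet> x)^2 + (1 - l b2) * (b2 \<bullet> x)^2 \<le> x \<bullet> x - x \<bullet> (P *v x)" for x
  proof -
    have "(\<Sum>b\<in>{b1,b2}. (1 - l b) * (x \<bullet> b)^2) \<le> (\<Sum>b\<in>B. (1 - l b) * (x \<bullet> b)^2)"
      using l01 by (intro sum_mono2[OF Bf sub2]) auto
    also have "\<dots> = x \<bullet> x - x \<bullet> (P *v x)" unfolding Pq xx
      by (simp add: algebra_simps sum_subtractf)
    finally show ?thesis using ne by (simp add: inner_commute)
  qed
  define \<mu> where "\<mu> = min (min (l b1) (l b2)) (min (1 - l b1) (1 - l b2))"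
  have \<mu>0: "0 < \<mu>" unfolding \<mu>_def using b1 b2 by auto
  define \<epsilon> where "\<epsilon> = \<mu> / (C + 1)"
  have \<epsilon>0: "0 < \<epsilon>" unfolding \<epsilon>_def using \<mu>0 C0 by simp
  have \<epsilon>C: "\<epsilon> * C \<le> \<mu>"
  proof -
    have "\<epsilon> * C \<le> \<epsilon> * (C + 1)" using \<epsilon>0 by simp
    also have "\<dots> = \<mu>" unfolding \<epsilon>_def using C0 by simp
    finally show ?thesis .
  qed
  have good: "P + s *\<^sub>R D \<in> Fset k \<and> minner M (P + s *\<^sub>R D) = 0" if s: "\<bar>s\<bar> \<le> \<epsilon>" for s
  proof -
    have qs: "\<bar>s * (x \<bullet> (D *v x))\<bar> \<le> \<mu> * ((b1 \<bullet> x)^2 + (b2 \<bullet> x)^2)" for x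
    proof -
      have "\<bar>s * (x \<bullet> (D *v x))\<bar> = \<bar>s\<bar> * \<bar>x \<bullet> (D *v x)\<bar>" by (simp add: abs_mult)
      also have "\<dots> \<le> \<epsilon> * (C * ((b1 \<bullet> x)^2 + (b2 \<bullet> x)^2))"
        using s Dbound[of x] by (intro mult_mono) auto
      also have "\<dots> = (\<epsilon> * C) * ((b1 \<bullet> x)^2 + (b2 \<bullet> x)^2)" by simp
      also have "\<dots> \<le> \<mu> * ((b1 \<bullet> x)^2 + (b2 \<bullet> x)^2)" using \<epsilon>C by (intro mult_right_mono) auto
      finally show ?thesis .
    qed
    have m1: "\<mu> * (b1 \<bullet> x)^2 \<le> l b1 * (b1 \<bullet> x)^2" "\<mu> * (b2 \<bullet> x)^2 \<le> l b2 * (b2 \<bullet> x)^2"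
         "\<mu> * (b1 \<bullet> x)^2 \<le> (1 - l b1) * (b1 \<bullet> x)^2" "\<mu> * (b2 \<bullet> x)^2 \<le> (1 - l b2) * (b2 \<bullet> x)^2" for x
      unfolding \<mu>_def by (auto intro!: mult_right_mono)
    have "transpose (P + s *\<^sub>R D) = P + s *\<^sub>R D" using sym Dsym by (simp add: lin_simps)
    moreover have "0 \<le> x \<bullet> ((P + s *\<^sub>R D) *v x)" for x
    proof -
      have "x \<bullet> ((P + s *\<^sub>R D) *v x) = x \<bullet> (P *v x) + s * (x \<bullet> (D *v x))" by (simp add: lin_simps)
      thus ?thesis using qs[of x] lowP[of x] m1(1,2)[of x] by (simp add: algebra_simps abs_le_iff)
    qed
    moreover have "x \<bullet> ((P + s *\<^sub>R D) *v x) \<le> x \<bullet> x" for x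
    proof -
      have "x \<bullet> ((P + s *\<^sub>R D) *v x) = x \<bullet> (P *v x) + s * (x \<bullet> (D *v x))" by (simp add: lin_simps)
      thus ?thesis using qs[of x] upP[of x] m1(3,4)[of x] by (simp add: algebra_simps abs_le_iff)
    qed
    moreover have "trace (P + s *\<^sub>R D) \<le> real k" using tP Dtr by (simp add: lin_simps)
    moreover have "minner M (P + s *\<^sub>R D) = 0" using PH DM by (simp add: lin_simps)
    ultimately show ?thesis unfolding Fset_def by blast
  qed
  have g1: "P + \<epsilon> *\<^sub>R D \<in> Fset k \<and> minner M (P + \<epsilon> *\<^sub>R D) = 0" using good[of \<epsilon>] \<epsilon>0 by simp
  have g2: "P + (-\<epsilon>) *\<^sub>R D \<in> Fset k \<and> minner M (P + (-\<epsilon>) *\<^sub>R D) = 0" using good[of "-\<epsilon>"] \<epsilon>0 by simp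
  have "\<epsilon> *\<^sub>R D \<noteq> 0" using Dne \<epsilon>0 by simp
  thus ?thesis using g1 g2 by (intro exI[of _ "\<epsilon> *\<^sub>R D"]) (simp add: algebra_simps)
qed

lemma extreme_in_X:
  fixes M P :: "real^'n^'n"
  assumes ext: "P extreme_point_of (Fset k \<inter> {P. minner M P = 0})"
  shows "P \<in> Xset k"
proof -
  have PF: "P \<in> Fset k" and PH: "minner M P = 0" using ext unfolding extreme_point_of_def by auto
  have sym: "transpose P = P" and nn: "\<forall>x. 0 \<le> x \<bullet> (P *v x)" and leI: "\<forall>x. x \<bullet> (P *v x) \<le> x \<bullet> x"
    and tP: "trace P \<le> real k" using PF unfolding Fset_def by auto
  have psd: "psd P" using sym nn unfolding psd_def by auto
  obtain B where B: "onb B" and eig0: "\<forall>b\<in>B. P *v b = (b \<bullet> (P *v b)) *\<^sub>R b"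
    using spectral_onb[OF sym] by blast
  define l where "l b = b \<bullet> (P *v b)" for b
  have eig: "\<forall>b\<in>B. P *v b = l b *\<^sub>R b" using eig0 unfolding l_def by auto
  have Bf: "finite B" using B unfolding onb_def by auto
  have l01: "\<forall>b\<in>B. 0 \<le> l b \<and> l b \<le> 1"
    using nn leI onb_inner[OF B] unfolding l_def by (metis order.refl)
  define J where "J = {b\<in>B. 0 < l b \<and> l b < 1}"
  have Jf: "finite J" using Bf unfolding J_def by auto
  have cJ: "card J \<le> 1"
  proof (rule ccontr)
    assume "\<not> card J \<le> 1"
    then obtain b1 b2 where bb: "b1 \<in> J" "b2 \<in> J" "b1 \<noteq> b2"
      using card_le_Suc0_iff_eq[OF Jf] by auto
    obtain D where D: "D \<noteq> 0" "P + D \<in> Fset k" "minner M (P + D) = 0" "P - D \<in> Fset k" "minner M (P - D) = 0"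
      using perturb[OF PF PH B eig, of b1 b2] bb l01 unfolding J_def by auto
    have "(P + D) + (P - D) = P + P" by (simp only: diff_conv_add_uminus add.assoc add.left_commute[of D P] add.right_inverse add_0_right)
    also have "\<dots> = (2::real) *\<^sub>R P" by (rule scaleR_2[symmetric])
    finally have mid: "P = midpoint (P + D) (P - D)" unfolding midpoint_def by simp
    have ne: "P + D \<noteq> P - D"
    proof
      assume "P + D = P - D"
      hence "D = - D" by (simp only: diff_conv_add_uminus add_left_cancel)
      hence "D + D = 0" by (metis add.right_inverse)
      hence "(2::real) *\<^sub>R D = 0" by (simp only: scaleR_2)
      thus False using D(1) by simp
    qed
    have mo: "midpoint (P + D) (P - D) \<in> open_segment (P + D) (P - D)"
      by (rule midpoint_in_open_segment[THEN iffD2, OF ne])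
    have "P \<in> open_segment (P + D) (P - D)" using mo unfolding mid[symmetric] .
    thus False using ext D unfolding extreme_point_of_def by auto
  qed
  define N where "N = {b\<in>B. l b \<noteq> 0}"
  define N1 where "N1 = {b\<in>B. l b = 1}"
  have Nf: "finite N" "finite N1" using Bf unfolding N_def N1_def by auto
  have NU: "N = N1 \<union> J" and disj: "N1 \<inter> J = {}" using l01 unfolding N_def N1_def J_def by force+
  have "trace P = (\<Sum>b\<in>B. l b)" unfolding l_def by (rule onb_trace[OF B])
  also have "\<dots> = (\<Sum>b\<in>N. l b)" unfolding N_def by (rule sum.mono_neutral_right) (use Bf in auto)
  also have "\<dots> = (\<Sum>b\<in>N1. l b) + (\<Sum>b\<in>J. l b)" unfolding NU
    by (rule sum.union_disjoint) (use Nf Jf disj NU in auto)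
  also have "(\<Sum>b\<in>N1. l b) = real (card N1)" unfolding N1_def by simp
  finally have tr: "real (card N1) + (\<Sum>b\<in>J. l b) \<le> real k" using tP by simp
  have cN: "card N \<le> k"
  proof (cases "J = {}")
    case True
    thus ?thesis using tr NU by simp
  next
    case False
    then obtain j where J1: "J = {j}" using cJ Jf
      by (metis One_nat_def card_0_eq card_1_singletonE le_SucE le_zero_eq)
    have "0 < l j" using J1 unfolding J_def by auto
    hence "card N1 < k" using tr J1 by simp
    moreover have "card N = card N1 + 1" using NU disj J1 Nf by (simp add: card_Un_disjoint)
    ultimately show ?thesis by simp
  qed
  have "range (\<lambda>x. P *v x) \<subseteq> span N"
  proof
    fix y assume "y \<in> range (\<lambda>x. P *v x)"
    then obtain x where y: "y = P *v x" by auto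
    have "P *v x = (\<Sum>b\<in>B. ((x \<bullet> b) * l b) *\<^sub>R b)" by (rule onb_eig_apply[OF B eig])
    also have "\<dots> = (\<Sum>b\<in>N. ((x \<bullet> b) * l b) *\<^sub>R b)" unfolding N_def
      by (rule sum.mono_neutral_right) (use Bf in auto)
    also have "\<dots> \<in> span N" by (intro span_sum span_scale span_base)
    finally show "y \<in> span N" using y by simp
  qed
  hence "dim (range (\<lambda>x. P *v x)) \<le> card N" using Nf(1) by (rule dim_le_card)
  hence "rank P \<le> k" using cN by (simp add: rank_dim_range)
  moreover have "spec_norm P \<le> 1" using psd leI by (rule psd_le_I_spec)
  ultimately show ?thesis using psd unfolding Xset_def by auto
qed

lemma convex_H: "convex {P::real^'n^'n. minner M P = 0}"
  unfolding convex_def by (simp add: lin_simps)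

lemma lemma_H:
  fixes M P :: "real^'n^'n"
  assumes "P \<in> Fset k" "minner M P = 0"
  shows "P \<in> convex hull (Xset k \<inter> {Y. minner M Y = 0})"
proof -
  let ?K = "Fset k \<inter> {Y::real^'n^'n. minner M Y = 0}"
  have "bounded ?K" by (rule bounded_subset[OF bounded_Fset]) auto
  moreover have "closed ?K" by (intro closed_Int closed_Fset closed_H)
  ultimately have "compact ?K" by (simp add: compact_eq_bounded_closed)
  moreover have "convex ?K" using convex_Fset convex_H by (rule convex_Int)
  ultimately have K: "?K = convex hull {x. x extreme_point_of ?K}" by (rule Krein_Milman_Minkowski)
  have "{x. x extreme_point_of ?K} \<subseteq> Xset k \<inter> {Y. minner M Y = 0}"
  proof
    fix x assume x: "x \<in> {x. x extreme_point_of ?K}"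
    hence "x \<in> Xset k" using extreme_in_X by blast
    moreover have "minner M x = 0" using x unfolding extreme_point_of_def by auto
    ultimately show "x \<in> Xset k \<inter> {Y. minner M Y = 0}" by auto
  qed
  hence "convex hull {x. x extreme_point_of ?K} \<subseteq> convex hull (Xset k \<inter> {Y. minner M Y = 0})"
    by (rule hull_mono)
  moreover have "P \<in> ?K" using assms by auto
  ultimately show ?thesis using K by blast
qed

lemma closure_convX_sub_F: "closure (convex hull (Xset k)) \<subseteq> Fset k"
  by (intro closure_minimal hull_minimal Xset_sub_Fset convex_Fset closed_Fset)

lemma convex_Crel:
  fixes A :: "nat \<Rightarrow> real^'n^'n"
  shows "convex (Crel k m A)"
proof (rule convexI)
  fix p1 p2 :: "real \<times> (real^'n^'n)" and u v :: real
  assume p1: "p1 \<in> Crel k m A" and p2: "p2 \<in> Crel k m A" and uv: "0 \<le> u" "0 \<le> v" "u + v = 1"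
  obtain z1 X1 where e1: "p1 = (z1, X1)" by (cases p1)
  obtain z2 X2 where e2: "p2 = (z2, X2)" by (cases p2)
  have X1: "X1 \<in> closure (convex hull Xset k)" "\<forall>i<m. z1 \<le> minner (A i) X1"
    using p1 e1 unfolding Crel_def by auto
  have X2: "X2 \<in> closure (convex hull Xset k)" "\<forall>i<m. z2 \<le> minner (A i) X2"
    using p2 e2 unfolding Crel_def by auto
  have "convex (closure (convex hull (Xset k :: (real^'n^'n) set)))" by (simp add: convex_closure)
  hence "u *\<^sub>R X1 + v *\<^sub>R X2 \<in> closure (convex hull Xset k)"
    using X1 X2 uv unfolding convex_def by blast
  moreover have "u * z1 + v * z2 \<le> minner (A i) (u *\<^sub>R X1 + v *\<^sub>R X2)" if "i < m" for i
  proof -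
    have "u * z1 \<le> u * minner (A i) X1" using X1 that uv by (simp add: mult_left_mono)
    moreover have "v * z2 \<le> v * minner (A i) X2" using X2 that uv by (simp add: mult_left_mono)
    ultimately show ?thesis by (simp add: lin_simps)
  qed
  ultimately show "u *\<^sub>R p1 + v *\<^sub>R p2 \<in> Crel k m A" unfolding Crel_def e1 e2 by simp
qed

lemma closed_Crel:
  fixes A :: "nat \<Rightarrow> real^'n^'n"
  shows "closed (Crel k m A)"
proof -
  have "Crel k m A = (UNIV \<times> closure (convex hull Xset k)) \<inter>
      (\<Inter>i\<in>{..<m}. {p. fst p \<le> minner (A i) (snd p)})"
    unfolding Crel_def by auto
  also have "closed \<dots>"
  proof (intro closed_Int closed_Times closed_INT ballI closed_UNIV closed_closure)
    fix i
    have "linear (\<lambda>p::real \<times> (real^'n^'n). minner (A i) (snd p))"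
      by (rule linearI) (simp_all add: lin_simps)
    hence "continuous_on UNIV (\<lambda>p::real \<times> (real^'n^'n). minner (A i) (snd p))"
      by (simp add: linear_continuous_on linear_conv_bounded_linear)
    thus "closed {p::real \<times> (real^'n^'n). fst p \<le> minner (A i) (snd p)}"
      by (intro closed_Collect_le continuous_on_fst continuous_on_id)
  qed
  finally show ?thesis .
qed

theorem corollary10:
  fixes k m :: nat and A :: "nat \<Rightarrow> real^'n^'n"
  assumes "1 \<le> k" and "k \<le> CARD('n)"
    and "\<forall>i<m. psd (A i)"
    and "dim (span (A ` {..<m})) = 2"
  shows "Crel k m A = closure (convex hull (Cset k m A))"
proof -
  let ?C = "Cset k m A"
  have CsubCrel: "?C \<subseteq> Crel k m A"
  proof
    fix p assume pC: "p \<in> ?C"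
    obtain z X where pe: "p = (z, X)" by (cases p)
    have X: "X \<in> Xset k" and zX: "\<forall>i<m. z \<le> minner (A i) X" using pC unfolding pe Cset_def by simp_all
    have "X \<in> convex hull Xset k" using X by (rule hull_inc)
    hence "X \<in> closure (convex hull Xset k)" by (rule rev_subsetD[OF _ closure_subset])
    thus "p \<in> Crel k m A" using zX unfolding pe Crel_def by simp
  qed
  have sup: "closure (convex hull ?C) \<subseteq> Crel k m A"
    by (intro closure_minimal hull_minimal CsubCrel convex_Crel closed_Crel)
  have dV: "dim (A ` {..<m}) = 2" using assms(4) by simp
  obtain BB where BB: "BB \<subseteq> A ` {..<m}" "independent BB" "A ` {..<m} \<subseteq> span BB" "card BB = dim (A ` {..<m})"
    by (rule basis_exists)
  have "card BB = 2" using BB(4) dV by simp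
  then obtain u v where uv: "BB = {u, v}" "u \<noteq> v" unfolding card_2_iff by blast
  obtain p where p: "p < m" "A p = u" using BB(1) uv by auto
  obtain q where q: "q < m" "A q = v" using BB(1) uv by auto
  have rep: "\<exists>a b. A i = a *\<^sub>R A p + b *\<^sub>R A q" if "i < m" for i
  proof -
    have "A i \<in> span {A p, A q}" using BB(3) that p q uv by auto
    then obtain a where "A i - a *\<^sub>R A p \<in> span {A q}" using span_breakdown_eq by blast
    then obtain b where "A i - a *\<^sub>R A p = b *\<^sub>R A q" using span_singleton by blast
    hence "A i = a *\<^sub>R A p + b *\<^sub>R A q" by (simp add: algebra_simps)
    thus ?thesis by blast
  qed
  obtain a b where ab: "\<forall>i<m. A i = a i *\<^sub>R A p + b i *\<^sub>R A q" using rep by metis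
  have Ai: "minner (A i) Y = a i * minner (A p) Y + b i * minner (A q) Y" if "i < m" for i Y
  proof -
    have "minner (A i) Y = minner (a i *\<^sub>R A p + b i *\<^sub>R A q) Y" using ab that by simp
    thus ?thesis by (simp add: minner_add_l minner_scaleR_l)
  qed
  have psdp: "psd (A p)" and psdq: "psd (A q)" using assms(3) p q by auto
  have sub: "Crel k m A \<subseteq> convex hull ?C"
  proof
    fix zP assume zP: "zP \<in> Crel k m A"
    then obtain z P where e: "zP = (z, P)" and Pcl: "P \<in> closure (convex hull Xset k)"
      and zle: "\<forall>i<m. z \<le> minner (A i) P" unfolding Crel_def by auto
    have PF: "P \<in> Fset k" using Pcl closure_convX_sub_F by blast
    have psdP: "psd P" using PF unfolding Fset_def psd_def by auto
    define w1 where "w1 = minner (A p) P"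
    define w2 where "w2 = minner (A q) P"
    have w1: "0 \<le> w1" unfolding w1_def by (rule minner_psd_nonneg[OF psdp psdP])
    have w2: "0 \<le> w2" unfolding w2_def by (rule minner_psd_nonneg[OF psdq psdP])
    show "zP \<in> convex hull ?C"
    proof (cases "w1 = 0 \<and> w2 = 0")
      case True
      define M where "M = A p + A q"
      have "minner M P = 0" unfolding M_def using True by (simp add: minner_add_l w1_def w2_def)
      hence Pin: "P \<in> convex hull (Xset k \<inter> {Y. minner M Y = 0})" by (rule lemma_H[OF PF])
      let ?S = "Xset k \<inter> {Y. minner M Y = 0}"
      have z0: "z \<le> 0" using zle p True unfolding w1_def by auto
      have img: "(\<lambda>x. (z, 0) + x) ` (\<lambda>Y. (0::real, Y)) ` ?S \<subseteq> ?C"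
      proof
        fix x assume "x \<in> (\<lambda>x. (z, 0) + x) ` (\<lambda>Y. (0::real, Y)) ` ?S"
        then obtain Y where Y: "Y \<in> ?S" "x = (z, Y)" by auto
        have psdY: "psd Y" using Y unfolding Xset_def by auto
        have "0 \<le> minner (A p) Y" "0 \<le> minner (A q) Y"
          using minner_psd_nonneg[OF psdp psdY] minner_psd_nonneg[OF psdq psdY] by auto
        moreover have "minner (A p) Y + minner (A q) Y = 0" using Y unfolding M_def by (simp add: minner_add_l)
        ultimately have "minner (A p) Y = 0" "minner (A q) Y = 0" by linarith+
        hence "\<forall>i<m. minner (A i) Y = 0" using Ai by simp
        thus "x \<in> ?C" using Y z0 unfolding Cset_def by auto
      qed
      have lin0: "linear (\<lambda>Y::real^'n^'n. (0::real, Y))" by (rule linearI) simp_all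
      have "(0::real, P) \<in> (\<lambda>Y. (0::real, Y)) ` (convex hull ?S)" using Pin by blast
      hence "(0::real, P) \<in> convex hull ((\<lambda>Y. (0::real, Y)) ` ?S)"
        using convex_hull_linear_image[OF lin0] by blast
      hence "(z, 0) + (0, P) \<in> (\<lambda>x. (z, 0) + x) ` (convex hull ((\<lambda>Y. (0::real, Y)) ` ?S))" by blast
      hence "(z, P) \<in> (\<lambda>x. (z, 0) + x) ` (convex hull ((\<lambda>Y. (0::real, Y)) ` ?S))" by simp
      hence "(z, P) \<in> convex hull ((\<lambda>x. (z, 0) + x) ` (\<lambda>Y. (0::real, Y)) ` ?S)"
        by (simp only: convex_hull_translation)
      thus ?thesis using hull_mono[OF img] e by blast
    next
      case False
      define M where "M = w2 *\<^sub>R A p - w1 *\<^sub>R A q"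
      define nn where "nn = w1^2 + w2^2"
      have nn: "0 < nn" unfolding nn_def using False w1 w2 by (auto simp: add_pos_nonneg add_nonneg_pos)
      define ell where "ell Y = (w1 * minner (A p) Y + w2 * minner (A q) Y) / nn" for Y
      have "minner M P = 0" unfolding M_def w1_def w2_def by (simp add: minner_diff_l minner_scaleR_l)
      hence Pin: "P \<in> convex hull (Xset k \<inter> {Y. minner M Y = 0})" by (rule lemma_H[OF PF])
      let ?S = "Xset k \<inter> {Y. minner M Y = 0}"
      define \<Phi> where "\<Phi> Y = (z * ell Y, Y)" for Y
      have linP: "linear \<Phi>" unfolding \<Phi>_def ell_def
        by (rule linearI) (simp_all add: lin_simps algebra_simps add_divide_distrib)
      have ellP: "ell P = 1" unfolding ell_def nn_def w1_def[symmetric] w2_def[symmetric]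
        using nn False unfolding nn_def by (simp add: power2_eq_square)
      have img: "\<Phi> ` ?S \<subseteq> ?C"
      proof
        fix x assume "x \<in> \<Phi> ` ?S"
        then obtain Y where Y: "Y \<in> ?S" "x = \<Phi> Y" by auto
        have psdY: "psd Y" using Y unfolding Xset_def by auto
        define y1 where "y1 = minner (A p) Y"
        define y2 where "y2 = minner (A q) Y"
        have y: "0 \<le> y1" "0 \<le> y2" unfolding y1_def y2_def
          using minner_psd_nonneg[OF psdp psdY] minner_psd_nonneg[OF psdq psdY] by auto
        have h: "w2 * y1 = w1 * y2" using Y unfolding M_def y1_def y2_def
          by (simp add: minner_diff_l minner_scaleR_l)
        have ell: "ell Y = (w1 * y1 + w2 * y2) / nn" unfolding ell_def y1_def y2_def by simp
        have e1: "y1 = ell Y * w1"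
        proof -
          have "y1 * nn = w1 * (w1 * y1 + w2 * y2)" unfolding nn_def
            using h by (simp add: power2_eq_square algebra_simps)
          thus ?thesis unfolding ell using nn by (simp add: field_simps)
        qed
        have e2: "y2 = ell Y * w2"
        proof -
          have "y2 * nn = w2 * (w1 * y1 + w2 * y2)" unfolding nn_def
            using h by (simp add: power2_eq_square algebra_simps)
          thus ?thesis unfolding ell using nn by (simp add: field_simps)
        qed
        have ell0: "0 \<le> ell Y" unfolding ell using y w1 w2 nn by simp
        have "z * ell Y \<le> minner (A i) Y" if i: "i < m" for i
        proof -
          have "minner (A i) Y = ell Y * minner (A i) P"
            using Ai[OF i, of Y] Ai[OF i, of P] e1 e2 unfolding y1_def y2_def w1_def w2_def
            by (simp add: algebra_simps)
          moreover have "z * ell Y \<le> minner (A i) P * ell Y" using zle i ell0 by (simp add: mult_right_mono)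
          ultimately show ?thesis by (simp add: mult.commute)
        qed
        thus "x \<in> ?C" using Y unfolding Cset_def \<Phi>_def by auto
      qed
      have "\<Phi> P \<in> \<Phi> ` (convex hull ?S)" using Pin by blast
      hence "\<Phi> P \<in> convex hull (\<Phi> ` ?S)" using convex_hull_linear_image[OF linP] by blast
      moreover have "\<Phi> P = zP" unfolding \<Phi>_def e using ellP by simp
      ultimately show ?thesis using hull_mono[OF img] by blast
    qed
  qed
  have "Crel k m A \<subseteq> closure (convex hull ?C)" using sub closure_subset[of "convex hull ?C"] by (rule order_trans)
  thus ?thesis using sup by (rule subset_antisym)
qed

end
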